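(* Let $\epsilon>0$, $\delta>0$, and let $\rho$ be a pure $n$-qubit state. Then $N=O(n\log(1/\delta)/\epsilon^2)$ pairs of copies $\rho\otimes\rho$ suffice to produce, with probability $1-\delta$, estimates $\pi_\rho(x_{1:k})$ such that $|\pi_\rho(x_{1:k})-p_\rho(x_{1:k})|\le\epsilon/2^k$ simultaneously for all $x\in\{0,1\}^{2n}$ and all $1\le k\le n$.
   Context: Pauli strings are labelled by $x=(x_1,\dots,x_n)$ with $x_i=(v_i,w_i)\in\{0,1\}^2$, via $P_x=i^{v\cdot w}(X^{v_1}Z^{w_1})\otimes\cdots\otimes(X^{v_n}Z^{w_n})$. The Pauli distribution of a pure state is $p_\rho(x)=\mathrm{tr}(\rho P_x)^2/2^n$ on $\{0,1\}^{2n}$, and $p_\rho(x_{1:k})=\sum_{x_{k+1},\dots,x_n}p_\rho(x)$ is the marginal on the first $k$ qubit labels $x_1,\dots,x_k$ (each $x_i$ a pair of bits). *)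

theory Defs
  imports Complex_Main
begin

(* Computational basis states of m qubits: bit lists of length m (head = qubit 1). *)
definition bitstrs :: "nat \<Rightarrow> bool list set" where
  "bitstrs m = {bs. length bs = m}"

(* Pauli labels x = (x_1,...,x_m), x_i = (v_i,w_i) *)
definition labels :: "nat \<Rightarrow> (bool \<times> bool) list set" where
  "labels m = {x. length x = m}"

definition bdot :: "bool list \<Rightarrow> bool list \<Rightarrow> nat" where
  "bdot v w = length (filter id (map2 (\<and>) v w))"

definition pure_state :: "nat \<Rightarrow> (bool list \<Rightarrow> complex) \<Rightarrow> bool" where
  "pure_state n \<psi> \<longleftrightarrow> (\<Sum>b\<in>bitstrs n. (cmod (\<psi> b))^2) = 1"

(* tr(rho P_x) = <psi|P_x|psi>, where
   P_x |b> = i^(v.w) (-1)^(w.b) |b xor v>  for P_x = i^(v.w) (X^v1 Z^w1) (x) ... (x) (X^vn Z^wn) *)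
definition pauli_expect :: "nat \<Rightarrow> (bool list \<Rightarrow> complex) \<Rightarrow> (bool \<times> bool) list \<Rightarrow> complex" where
  "pauli_expect n \<psi> x =
     (let v = map fst x; w = map snd x in
       \<i> ^ (bdot v w) *
       (\<Sum>b\<in>bitstrs n. cnj (\<psi> (map2 (\<noteq>) b v)) * (-1) ^ (bdot w b) * \<psi> b))"

definition pauli_dist :: "nat \<Rightarrow> (bool list \<Rightarrow> complex) \<Rightarrow> (bool \<times> bool) list \<Rightarrow> real" where
  "pauli_dist n \<psi> x = Re ((pauli_expect n \<psi> x)^2) / 2^n"

definition pauli_marg :: "nat \<Rightarrow> (bool list \<Rightarrow> complex) \<Rightarrow> nat \<Rightarrow> (bool \<times> bool) list \<Rightarrow> real" where
  "pauli_marg n \<psi> k y = (\<Sum>z\<in>labels (n - k). pauli_dist n \<psi> (y @ z))"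

definition tensor_pow :: "nat \<Rightarrow> nat \<Rightarrow> (bool list \<Rightarrow> complex) \<Rightarrow> bool list \<Rightarrow> complex" where
  "tensor_pow n M \<psi> bs = (\<Prod>j<M. \<psi> (take n (drop (j * n) bs)))"

definition qform :: "nat \<Rightarrow> (bool list \<Rightarrow> bool list \<Rightarrow> complex) \<Rightarrow> (bool list \<Rightarrow> complex) \<Rightarrow> complex" where
  "qform m A v = (\<Sum>a\<in>bitstrs m. \<Sum>b\<in>bitstrs m. cnj (v a) * A a b * v b)"

definition psd :: "nat \<Rightarrow> (bool list \<Rightarrow> bool list \<Rightarrow> complex) \<Rightarrow> bool" where
  "psd m A \<longleftrightarrow> (\<forall>v. qform m A v \<in> \<real> \<and> Re (qform m A v) \<ge> 0)"

definition povm :: "nat \<Rightarrow> nat set \<Rightarrow> (nat \<Rightarrow> bool list \<Rightarrow> bool list \<Rightarrow> complex) \<Rightarrow> bool" where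
  "povm m \<Omega> E \<longleftrightarrow> finite \<Omega> \<and> (\<forall>r\<in>\<Omega>. psd m (E r)) \<and>
     (\<forall>a\<in>bitstrs m. \<forall>b\<in>bitstrs m. (\<Sum>r\<in>\<Omega>. E r a b) = (if a = b then 1 else 0))"

definition outcome_prob :: "nat \<Rightarrow> (nat \<Rightarrow> bool list \<Rightarrow> bool list \<Rightarrow> complex) \<Rightarrow> nat \<Rightarrow> (bool list \<Rightarrow> complex) \<Rightarrow> real" where
  "outcome_prob m E r \<Phi> = Re (qform m (E r) \<Phi>)"

end

theory Submission
  imports Defs "HOL-Library.Nat_Bijection"
begin


definition xr :: "bool list \<Rightarrow> bool list \<Rightarrow> bool list" where
  "xr a b = map2 (\<noteq>) a b"

lemma bdot_Nil[simp]: "bdot [] w = 0" "bdot v [] = 0"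
  by (auto simp: bdot_def)

lemma bdot_Cons[simp]: "bdot (x#xs) (y#ys) = (if x \<and> y then 1 else 0) + bdot xs ys"
  by (auto simp: bdot_def)

lemma bdot_sym: "bdot v w = bdot w v"
proof (induction v arbitrary: w)
  case Nil then show ?case by simp
next
  case (Cons a v) then show ?case by (cases w) auto
qed

lemma xr_Nil[simp]: "xr [] b = []" "xr a [] = []" by (auto simp: xr_def)
lemma xr_Cons[simp]: "xr (x#xs) (y#ys) = (x \<noteq> y) # xr xs ys" by (auto simp: xr_def)
lemma length_xr[simp]: "length (xr a b) = min (length a) (length b)" by (simp add: xr_def)

lemma xr_comm: "xr a b = xr b a"
proof (induction a arbitrary: b)
  case Nil then show ?case by simp
next
  case (Cons x a) then show ?case by (cases b) auto
qed

lemma xr_assoc: "xr (xr a b) c = xr a (xr b c)"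
proof (induction a arbitrary: b c)
  case Nil then show ?case by simp
next
  case (Cons x a) then show ?case by (cases b; cases c) auto
qed

lemma xr_self: "xr a a = replicate (length a) False"
  by (induction a) auto

lemma xr_zeros: "length a = n \<Longrightarrow> xr a (replicate n False) = a"
  by (induction a arbitrary: n) auto

lemma xr_cancel: "length a = length b \<Longrightarrow> xr a (xr a b) = b"
  by (metis xr_assoc xr_self xr_comm xr_zeros)

lemma xr_cancel2: "length a = length b \<Longrightarrow> xr (xr b a) a = b"
  by (metis xr_assoc xr_comm xr_cancel)

lemma xr_eq_zeros: "length a = length b \<Longrightarrow> (xr a b = replicate (length a) False) = (a = b)"
proof (induction a arbitrary: b)
  case Nil then show ?case by simp
next
  case (Cons x a) then show ?case by (cases b) auto
qed

lemma bitstrs_xr: "a \<in> bitstrs n \<Longrightarrow> b \<in> bitstrs n \<Longrightarrow> xr a b \<in> bitstrs n"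
  by (simp add: bitstrs_def)

lemma bdot_xr_even: "length a = length b \<Longrightarrow> even (bdot w (xr a b) + bdot w a + bdot w b)"
proof (induction w arbitrary: a b)
  case Nil then show ?case by simp
next
  case (Cons x w)
  show ?case
  proof (cases a)
    case Nil then show ?thesis using Cons by simp
  next
    case a: (Cons y a')
    then obtain z b' where b: "b = z # b'" using Cons.prems by (cases b) auto
    have "length a' = length b'" using Cons.prems a b by simp
    then have "even (bdot w (xr a' b') + bdot w a' + bdot w b')" by (rule Cons.IH)
    then show ?thesis using a b by (cases x; cases y; cases z) auto
  qed
qed

lemma sg_xr: "length a = length b \<Longrightarrow>
   ((-1::'a::comm_ring_1) ^ bdot w (xr a b)) = (-1) ^ bdot w a * (-1) ^ bdot w b"
proof -
  assume "length a = length b"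
  then have ev: "even (bdot w (xr a b) + bdot w a + bdot w b)"
    using bdot_xr_even by blast
  have e1: "((-1::'a) ^ bdot w (xr a b)) * ((-1) ^ bdot w a * (-1) ^ bdot w b) = 1"
    using ev by (simp add: power_add[symmetric] add.assoc)
  have e2: "even (bdot w a + bdot w a + (bdot w b + bdot w b))" by simp
  have "((-1::'a) ^ bdot w a * (-1) ^ bdot w b) * ((-1) ^ bdot w a * (-1) ^ bdot w b) = 1"
    using e2 by (simp add: power_add[symmetric] ac_simps)
  with e1 show ?thesis
    by (metis mult.assoc mult.commute mult_1_right)
qed

lemma finite_bitstrs[simp]: "finite (bitstrs n)"
proof -
  have "bitstrs n = {xs. set xs \<subseteq> UNIV \<and> length xs = n}" by (auto simp: bitstrs_def)
  then show ?thesis using finite_lists_length_eq[of "UNIV::bool set" n] by simp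
qed

lemma finite_labels[simp]: "finite (labels n)"
proof -
  have "labels n = {xs. set xs \<subseteq> UNIV \<and> length xs = n}" by (auto simp: labels_def)
  then show ?thesis using finite_lists_length_eq[of "UNIV::(bool\<times>bool) set" n] by simp
qed

lemma card_bitstrs: "card (bitstrs n) = 2^n"
proof -
  have "bitstrs n = {xs. set xs \<subseteq> UNIV \<and> length xs = n}" by (auto simp: bitstrs_def)
  then show ?thesis using card_lists_length_eq[of "UNIV::bool set" n] by (simp add: card_UNIV_bool)
qed

lemma card_labels: "card (labels n) = 4^n"
proof -
  have "labels n = {xs. set xs \<subseteq> UNIV \<and> length xs = n}" by (auto simp: labels_def)
  then show ?thesis using card_lists_length_eq[of "UNIV::(bool\<times>bool) set" n]
    by (simp add: UNIV_Times_UNIV[symmetric] card_cartesian_product del: UNIV_Times_UNIV)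
qed

lemma bitstrs_Suc: "bitstrs (Suc n) = (#) True ` bitstrs n \<union> (#) False ` bitstrs n"
proof -
  have "x \<in> (#) True ` bitstrs n \<union> (#) False ` bitstrs n" if "x \<in> bitstrs (Suc n)" for x
    using that by (cases x) (auto simp: bitstrs_def)
  then show ?thesis by (auto simp: bitstrs_def)
qed

lemma char_sum:
  "c \<in> bitstrs n \<Longrightarrow> (\<Sum>w\<in>bitstrs n. (-1::'a::comm_ring_1) ^ bdot w c) =
      (if c = replicate n False then 2^n else 0)"
proof (induction n arbitrary: c)
  case 0 then show ?case by (simp add: bitstrs_def)
next
  case (Suc n)
  then obtain c0 c' where c: "c = c0 # c'" "c' \<in> bitstrs n"
    by (cases c) (auto simp: bitstrs_def)
  have "(\<Sum>w\<in>bitstrs (Suc n). (-1::'a) ^ bdot w c) =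
        (\<Sum>w\<in>bitstrs n. (-1::'a) ^ bdot (True#w) c) + (\<Sum>w\<in>bitstrs n. (-1::'a) ^ bdot (False#w) c)"
    unfolding bitstrs_Suc
    by (subst sum.union_disjoint) (auto simp: sum.reindex inj_on_def)
  also have "\<dots> = ((if c0 then -1 else 1) + 1) * (\<Sum>w\<in>bitstrs n. (-1::'a) ^ bdot w c')"
    by (simp add: c sum_distrib_left algebra_simps sum.distrib[symmetric])
  finally show ?case using Suc.IH[OF c(2)] c by auto
qed



definition chunk :: "nat \<Rightarrow> nat \<Rightarrow> 'a list \<Rightarrow> 'a list" where
  "chunk L i a = take L (drop (i * L) a)"

lemma bij_append: "bij_betw (\<lambda>p. fst p @ snd p) (bitstrs L \<times> bitstrs K) (bitstrs (L + K))"
  by (rule bij_betw_byWitness[where f' = "\<lambda>x. (take L x, drop L x)"]) (auto simp: bitstrs_def)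

lemma sum_append_split:
  "(\<Sum>x\<in>bitstrs (L + K). g x) = (\<Sum>c\<in>bitstrs L. \<Sum>a\<in>bitstrs K. g (c @ a))"
proof -
  have "(\<Sum>x\<in>bitstrs (L + K). g x) = (\<Sum>p\<in>bitstrs L \<times> bitstrs K. g (fst p @ snd p))"
    using sum.reindex_bij_betw[OF bij_append, of g] by simp
  also have "\<dots> = (\<Sum>c\<in>bitstrs L. \<Sum>a\<in>bitstrs K. g (c @ a))"
    by (simp add: sum.cartesian_product split_def)
  finally show ?thesis .
qed

lemma sum_take_drop:
  "(\<Sum>x\<in>bitstrs (L + K). g (take L x) (drop L x)) = (\<Sum>c\<in>bitstrs L. \<Sum>a\<in>bitstrs K. g c a)"
  by (subst sum_append_split) (auto simp: bitstrs_def intro!: sum.cong)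

lemma chunk_0_append: "length c = L \<Longrightarrow> chunk L 0 (c @ a) = c"
  by (simp add: chunk_def)

lemma chunk_Suc_append: "length c = L \<Longrightarrow> chunk L (Suc i) (c @ a) = chunk L i a"
  by (simp add: chunk_def add.commute)

lemma chunk_in: "a \<in> bitstrs (L * M) \<Longrightarrow> i < M \<Longrightarrow> chunk L i a \<in> bitstrs L"
proof -
  assume a: "a \<in> bitstrs (L * M)" and i: "i < M"
  have "i * L + L \<le> L * M" using i
    by (metis add.commute mult.commute mult_le_mono1 Suc_leI mult_Suc)
  then show ?thesis using a by (simp add: chunk_def bitstrs_def)
qed

lemma sum_chunks:
  fixes f :: "nat \<Rightarrow> bool list \<Rightarrow> 'b::comm_semiring_1"
  shows "(\<Sum>a\<in>bitstrs (L * M). \<Prod>i<M. f i (chunk L i a)) = (\<Prod>i<M. \<Sum>c\<in>bitstrs L. f i c)"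
proof (induction M arbitrary: f)
  case 0 then show ?case by (simp add: bitstrs_def)
next
  case (Suc M)
  have "(\<Sum>a\<in>bitstrs (L * Suc M). \<Prod>i<Suc M. f i (chunk L i a))
      = (\<Sum>c\<in>bitstrs L. \<Sum>a\<in>bitstrs (L * M). \<Prod>i<Suc M. f i (chunk L i (c @ a)))"
    using sum_append_split[where L=L and K="L*M"] by simp
  also have "\<dots> = (\<Sum>c\<in>bitstrs L. \<Sum>a\<in>bitstrs (L * M). f 0 c * (\<Prod>i<M. f (Suc i) (chunk L i a)))"
    by (intro sum.cong refl, simp only: prod.lessThan_Suc_shift) (simp add: chunk_0_append chunk_Suc_append bitstrs_def)
  also have "\<dots> = (\<Sum>c\<in>bitstrs L. f 0 c) * (\<Sum>a\<in>bitstrs (L * M). \<Prod>i<M. f (Suc i) (chunk L i a))"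
    by (rule sum_product[symmetric])
  also have "\<dots> = (\<Sum>c\<in>bitstrs L. f 0 c) * (\<Prod>i<M. \<Sum>c\<in>bitstrs L. f (Suc i) c)"
    using Suc.IH[of "\<lambda>i. f (Suc i)"] by simp
  also have "\<dots> = (\<Prod>i<Suc M. \<Sum>c\<in>bitstrs L. f i c)"
    by (simp only: prod.lessThan_Suc_shift)
  finally show ?case .
qed

lemma chunks_eq:
  "a \<in> bitstrs (L * M) \<Longrightarrow> b \<in> bitstrs (L * M) \<Longrightarrow> (\<forall>i<M. chunk L i a = chunk L i b) \<Longrightarrow> a = b"
proof (induction M arbitrary: a b)
  case 0 then show ?case by (simp add: bitstrs_def)
next
  case (Suc M)
  have a: "a = take L a @ drop L a" and b: "b = take L b @ drop L b" by simp_all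
  have la: "length (take L a) = L" and lb: "length (take L b) = L"
    using Suc.prems by (auto simp: bitstrs_def)
  have "take L a = take L b"
    using Suc.prems(3)[rule_format, of 0] by (simp add: chunk_def)
  moreover have "drop L a = drop L b"
  proof (rule Suc.IH)
    show "drop L a \<in> bitstrs (L * M)" "drop L b \<in> bitstrs (L * M)"
      using Suc.prems by (auto simp: bitstrs_def)
    show "\<forall>i<M. chunk L i (drop L a) = chunk L i (drop L b)"
    proof (intro allI impI)
      fix i assume "i < M"
      then have "chunk L (Suc i) a = chunk L (Suc i) b" using Suc.prems(3) by simp
      then show "chunk L i (drop L a) = chunk L i (drop L b)"
        using chunk_Suc_append[OF la, of i "drop L a"] chunk_Suc_append[OF lb, of i "drop L b"]
        by simp
    qed
  qed
  ultimately show ?case using a b by metis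
qed

lemma prod_pairs: "(\<Prod>i<2*N. h i) = (\<Prod>j<N. h (2*j) * h (2*j+1))"
  for h :: "nat \<Rightarrow> 'b::comm_monoid_mult"
  by (induction N) (simp_all add: mult.assoc)

lemma chunk_double_even: "chunk n (2*j) a = take n (chunk (2*n) j a)"
  by (simp add: chunk_def ac_simps)

lemma chunk_double_odd: "chunk n (2*j+1) a = drop n (chunk (2*n) j a)"
  by (simp add: chunk_def ac_simps drop_take algebra_simps)



definition bellA :: "nat \<Rightarrow> (bool list \<Rightarrow> complex) \<Rightarrow> bool list \<Rightarrow> bool list \<Rightarrow> complex" where
  "bellA n \<psi> v w = (\<Sum>d\<in>bitstrs n. (-1) ^ bdot w d * \<psi> (xr d v) * \<psi> d)"

definition qd :: "nat \<Rightarrow> (bool list \<Rightarrow> complex) \<Rightarrow> bool list \<Rightarrow> bool list \<Rightarrow> real" where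
  "qd n \<psi> v w = (cmod (bellA n \<psi> v w))^2 / 2^n"

definition sgnY :: "(bool \<times> bool) list \<Rightarrow> bool list \<Rightarrow> bool list \<Rightarrow> real" where
  "sgnY Y v' w' = (-1) ^ (bdot w' (map fst Y) + bdot v' (map snd Y) + bdot (map fst Y) (map snd Y))"

lemma reindex_xr:
  assumes "d \<in> bitstrs n"
  shows "(\<Sum>v\<in>bitstrs n. F v) = (\<Sum>b\<in>bitstrs n. F (xr d b))"
proof (rule sum.reindex_bij_witness[where i = "xr d" and j = "xr d"])
  fix a assume "a \<in> bitstrs n"
  then show "xr d (xr d a) = a" "xr d a \<in> bitstrs n"
    using assms by (simp_all add: bitstrs_def xr_cancel)
next
  fix a assume "a \<in> bitstrs n"
  then show "xr d (xr d a) = a" "xr d a \<in> bitstrs n"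
    using assms by (simp_all add: bitstrs_def xr_cancel)
qed (use assms in \<open>simp add: bitstrs_def xr_cancel\<close>)

lemma cnj_sg[simp]: "cnj ((-1::complex) ^ k) = (-1) ^ k"
  by simp

lemma char3:
  assumes "v \<in> bitstrs n" "d \<in> bitstrs n" "d' \<in> bitstrs n"
  shows "(\<Sum>w'\<in>bitstrs n. (-1::complex) ^ bdot w' v * (-1) ^ bdot w' d * (-1) ^ bdot w' d') =
         (if d' = xr d v then 2^n else 0)"
proof -
  have l: "length v = n" "length d = n" "length d' = n" using assms by (auto simp: bitstrs_def)
  have e: "(-1::complex) ^ bdot w' v * (-1) ^ bdot w' d * (-1) ^ bdot w' d' =
        (-1::complex) ^ bdot w' (xr (xr d d') v)" for w'
  proof -
    have "(-1::complex) ^ bdot w' (xr (xr d d') v) = (-1) ^ bdot w' (xr d d') * (-1) ^ bdot w' v"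
      by (rule sg_xr) (use l in simp)
    also have "(-1::complex) ^ bdot w' (xr d d') = (-1) ^ bdot w' d * (-1) ^ bdot w' d'"
      by (rule sg_xr) (use l in simp)
    finally show ?thesis by (simp only: ac_simps)
  qed
  have m: "xr (xr d d') v \<in> bitstrs n"
    using assms by (intro bitstrs_xr)
  have "(\<Sum>w'\<in>bitstrs n. (-1::complex) ^ bdot w' v * (-1) ^ bdot w' d * (-1) ^ bdot w' d') =
        (\<Sum>w'\<in>bitstrs n. (-1::complex) ^ bdot w' (xr (xr d d') v))"
    by (simp only: e)
  also have "\<dots> = (if xr (xr d d') v = replicate n False then 2^n else 0)"
    by (rule char_sum[OF m])
  also have "(xr (xr d d') v = replicate n False) = (xr d d' = v)"
  proof -
    have "length (xr d d') = n" using l by simp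
    then show ?thesis using xr_eq_zeros[of "xr d d'" v] l by simp
  qed
  also have "(xr d d' = v) = (d' = xr d v)"
  proof
    assume "xr d d' = v" then show "d' = xr d v" using xr_cancel[of d d'] l by simp
  next
    assume "d' = xr d v" then show "xr d d' = v" using xr_cancel[of d v] l by simp
  qed
  finally show ?thesis .
qed



lemma qd_expand:
  "complex_of_real (qd n \<psi> v' w') = (1 / 2^n) *
     (\<Sum>d\<in>bitstrs n. \<Sum>d'\<in>bitstrs n. ((-1) ^ bdot w' d * (-1) ^ bdot w' d') *
        (\<psi> (xr d v') * \<psi> d * cnj (\<psi> (xr d' v')) * cnj (\<psi> d')))"
proof -
  have "complex_of_real (qd n \<psi> v' w') = (1 / 2^n) * (bellA n \<psi> v' w' * cnj (bellA n \<psi> v' w'))"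
    by (simp add: qd_def complex_norm_square[symmetric])
  also have "bellA n \<psi> v' w' * cnj (bellA n \<psi> v' w') =
     (\<Sum>d\<in>bitstrs n. \<Sum>d'\<in>bitstrs n. ((-1) ^ bdot w' d * (-1) ^ bdot w' d') *
        (\<psi> (xr d v') * \<psi> d * cnj (\<psi> (xr d' v')) * cnj (\<psi> d')))"
    unfolding bellA_def cnj_sum sum_product
    by (intro sum.cong refl) (simp add: ac_simps)
  finally show ?thesis .
qed

lemma inner_v:
  assumes v: "v \<in> bitstrs n" and v': "v' \<in> bitstrs n"
  shows "(\<Sum>w'\<in>bitstrs n. complex_of_real (qd n \<psi> v' w') * (-1) ^ bdot w' v) =
     (\<Sum>d\<in>bitstrs n. \<psi> (xr d v') * \<psi> d * cnj (\<psi> (xr (xr d v) v')) * cnj (\<psi> (xr d v)))"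
proof -
  define P where "P d d' = \<psi> (xr d v') * \<psi> d * cnj (\<psi> (xr d' v')) * cnj (\<psi> d')" for d d'
  have "(\<Sum>w'\<in>bitstrs n. complex_of_real (qd n \<psi> v' w') * (-1) ^ bdot w' v) =
        (\<Sum>w'\<in>bitstrs n. \<Sum>d\<in>bitstrs n. \<Sum>d'\<in>bitstrs n.
            (1 / 2^n) * (((-1) ^ bdot w' v * (-1) ^ bdot w' d * (-1) ^ bdot w' d') * P d d'))"
    unfolding qd_expand P_def sum_distrib_left sum_distrib_right
    by (intro sum.cong refl) (simp add: ac_simps)
  also have "\<dots> = (\<Sum>d\<in>bitstrs n. \<Sum>d'\<in>bitstrs n. (1 / 2^n) *
       ((\<Sum>w'\<in>bitstrs n. (-1) ^ bdot w' v * (-1) ^ bdot w' d * (-1) ^ bdot w' d') * P d d'))"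
  proof -
    have "(\<Sum>w'\<in>bitstrs n. \<Sum>d\<in>bitstrs n. \<Sum>d'\<in>bitstrs n.
            (1 / 2^n) * (((-1) ^ bdot w' v * (-1) ^ bdot w' d * (-1) ^ bdot w' d') * P d d')) =
          (\<Sum>d\<in>bitstrs n. \<Sum>w'\<in>bitstrs n. \<Sum>d'\<in>bitstrs n.
            (1 / 2^n) * (((-1) ^ bdot w' v * (-1) ^ bdot w' d * (-1) ^ bdot w' d') * P d d'))"
      by (rule sum.swap)
    also have "\<dots> = (\<Sum>d\<in>bitstrs n. \<Sum>d'\<in>bitstrs n. \<Sum>w'\<in>bitstrs n.
            (1 / 2^n) * (((-1) ^ bdot w' v * (-1) ^ bdot w' d * (-1) ^ bdot w' d') * P d d'))"
      by (rule sum.cong[OF refl], rule sum.swap)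
    also have "\<dots> = (\<Sum>d\<in>bitstrs n. \<Sum>d'\<in>bitstrs n. (1 / 2^n) *
       ((\<Sum>w'\<in>bitstrs n. (-1) ^ bdot w' v * (-1) ^ bdot w' d * (-1) ^ bdot w' d') * P d d'))"
      by (simp only: sum_distrib_left sum_distrib_right)
    finally show ?thesis .
  qed
  also have "\<dots> = (\<Sum>d\<in>bitstrs n. \<Sum>d'\<in>bitstrs n. (if d' = xr d v then P d d' else 0))"
    by (intro sum.cong refl) (simp add: char3[OF v])
  also have "\<dots> = (\<Sum>d\<in>bitstrs n. P d (xr d v))"
    by (intro sum.cong refl) (simp add: sum.delta' bitstrs_xr v)
  finally show ?thesis by (simp add: P_def)
qed



lemma xr_xr_xr: "length d = length v \<Longrightarrow> length d = length b \<Longrightarrow> xr (xr d v) (xr d b) = xr b v"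
  by (metis xr_assoc xr_comm xr_cancel)

lemma i_pow_sq: "(\<i> ^ k)^2 = (-1::complex)^k"
proof -
  have "(\<i> ^ k)^2 = (\<i>^2)^k" by (simp only: power_mult[symmetric] mult.commute)
  then show ?thesis by simp
qed

lemma bell_identity:
  assumes Y: "Y \<in> labels n"
  shows "(\<Sum>v'\<in>bitstrs n. \<Sum>w'\<in>bitstrs n. complex_of_real (qd n \<psi> v' w' * sgnY Y v' w'))
         = pauli_expect n \<psi> Y ^ 2"
proof -
  define v where "v = map fst Y"
  define w where "w = map snd Y"
  have v: "v \<in> bitstrs n" and w: "w \<in> bitstrs n" using Y by (auto simp: v_def w_def labels_def bitstrs_def)
  define S where "S = (\<Sum>b\<in>bitstrs n. (-1) ^ bdot w b * \<psi> b * cnj (\<psi> (xr b v)))"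
  define P where "P v' d = \<psi> (xr d v') * \<psi> d * cnj (\<psi> (xr (xr d v) v')) * cnj (\<psi> (xr d v))" for v' d
  have sg: "complex_of_real (sgnY Y v' w') = (-1) ^ bdot w' v * ((-1) ^ bdot v' w * (-1) ^ bdot v w)" for v' w'
    by (simp add: sgnY_def v_def w_def power_add)
  have "(\<Sum>v'\<in>bitstrs n. \<Sum>w'\<in>bitstrs n. complex_of_real (qd n \<psi> v' w' * sgnY Y v' w'))
      = (\<Sum>v'\<in>bitstrs n. ((-1) ^ bdot v' w * (-1) ^ bdot v w) *
           (\<Sum>w'\<in>bitstrs n. complex_of_real (qd n \<psi> v' w') * (-1) ^ bdot w' v))"
    unfolding of_real_mult sg sum_distrib_left
    by (intro sum.cong refl) (simp only: ac_simps)
  also have "\<dots> = (\<Sum>v'\<in>bitstrs n. ((-1) ^ bdot v' w * (-1) ^ bdot v w) * (\<Sum>d\<in>bitstrs n. P v' d))"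
    by (intro sum.cong refl) (simp add: inner_v[OF v] P_def)
  also have "\<dots> = (-1) ^ bdot v w * (\<Sum>d\<in>bitstrs n. \<Sum>v'\<in>bitstrs n. (-1) ^ bdot v' w * P v' d)"
  proof -
    have "(\<Sum>v'\<in>bitstrs n. ((-1) ^ bdot v' w * (-1) ^ bdot v w) * (\<Sum>d\<in>bitstrs n. P v' d))
       = (\<Sum>v'\<in>bitstrs n. \<Sum>d\<in>bitstrs n. ((-1) ^ bdot v' w * (-1) ^ bdot v w) * P v' d)"
      by (simp only: sum_distrib_left)
    also have "\<dots> = (\<Sum>d\<in>bitstrs n. \<Sum>v'\<in>bitstrs n. ((-1) ^ bdot v' w * (-1) ^ bdot v w) * P v' d)"
      by (rule sum.swap)
    also have "\<dots> = (\<Sum>d\<in>bitstrs n. \<Sum>v'\<in>bitstrs n. (-1) ^ bdot v w * ((-1) ^ bdot v' w * P v' d))"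
      by (intro sum.cong refl) (simp only: ac_simps)
    also have "\<dots> = (-1) ^ bdot v w * (\<Sum>d\<in>bitstrs n. \<Sum>v'\<in>bitstrs n. (-1) ^ bdot v' w * P v' d)"
      by (simp only: sum_distrib_left)
    finally show ?thesis .
  qed
  also have "\<dots> = (-1) ^ bdot v w * (\<Sum>d\<in>bitstrs n. \<Sum>b\<in>bitstrs n. (-1) ^ bdot (xr d b) w * P (xr d b) d)"
    by (rule arg_cong[where f = "\<lambda>x. _ * x"], rule sum.cong[OF refl], erule reindex_xr)
  also have "\<dots> = (-1) ^ bdot v w * (\<Sum>d\<in>bitstrs n. \<Sum>b\<in>bitstrs n.
        ((-1) ^ bdot w d * \<psi> d * cnj (\<psi> (xr d v))) * ((-1) ^ bdot w b * \<psi> b * cnj (\<psi> (xr b v))))"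
  proof (intro arg_cong[where f = "\<lambda>x. _ * x"] sum.cong refl)
    fix d b assume d: "d \<in> bitstrs n" and b: "b \<in> bitstrs n"
    have l: "length d = n" "length b = n" "length v = n" using d b v by (auto simp: bitstrs_def)
    have "(-1::complex) ^ bdot (xr d b) w = (-1) ^ bdot w d * (-1) ^ bdot w b"
      using sg_xr[of d b w] l by (simp add: bdot_sym)
    moreover have "xr d (xr d b) = b" using l by (simp add: xr_cancel)
    moreover have "xr (xr d v) (xr d b) = xr b v" using l by (simp add: xr_xr_xr)
    ultimately show "(-1) ^ bdot (xr d b) w * P (xr d b) d =
        ((-1) ^ bdot w d * \<psi> d * cnj (\<psi> (xr d v))) * ((-1) ^ bdot w b * \<psi> b * cnj (\<psi> (xr b v)))"
      by (simp add: P_def ac_simps)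
  qed
  also have "\<dots> = (-1) ^ bdot v w * (S * S)"
    by (simp only: S_def sum_product)
  also have "\<dots> = pauli_expect n \<psi> Y ^ 2"
  proof -
    have "pauli_expect n \<psi> Y = \<i> ^ bdot v w * S"
      unfolding pauli_expect_def Let_def S_def v_def[symmetric] w_def[symmetric] xr_def
      by (intro arg_cong[where f = "\<lambda>x. _ * x"] sum.cong refl) (simp add: ac_simps)
    then have "pauli_expect n \<psi> Y ^ 2 = (\<i> ^ bdot v w)^2 * S^2"
      by (simp only: power_mult_distrib)
    also have "\<dots> = (-1) ^ bdot v w * (S * S)"
      by (simp only: i_pow_sq power2_eq_square[of S])
    finally show ?thesis by simp

  qed
  finally show ?thesis .
qed



lemma exp_quad:
  fixes x :: real assumes "\<bar>x\<bar> \<le> 1" shows "exp x \<le> 1 + x + x^2"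
proof (cases "x \<ge> 0")
  case True then show ?thesis using exp_bound[of x] assms by simp
next
  case False
  have pos: "0 < 1 - x" using False by simp
  have "1 - x \<le> exp (-x)" using exp_ge_add_one_self[of "-x"] by simp
  then have "exp x \<le> 1 / (1 - x)"
    using pos by (simp add: exp_minus field_simps)
  also have "\<dots> \<le> 1 + x + x^2"
  proof -
    have "1 \<le> (1 - x) * (1 + x + x^2)"
    proof -
      have "(1 - x) * (1 + x + x^2) = 1 - x^3" by (simp add: algebra_simps power2_eq_square power3_eq_cube)
      moreover have "x^3 \<le> 0" using False by (simp add: power_le_zero_eq)
      ultimately show ?thesis by simp
    qed
    then show ?thesis using pos by (simp add: field_simps)
  qed
  finally show ?thesis .
qed

lemma mgf_bound:
  fixes Q f :: "bool list \<Rightarrow> real"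
  assumes Q: "\<And>c. c \<in> bitstrs L \<Longrightarrow> Q c \<ge> 0" and sQ: "(\<Sum>c\<in>bitstrs L. Q c) = 1"
    and f: "\<And>c. c \<in> bitstrs L \<Longrightarrow> \<bar>f c\<bar> \<le> 1"
    and lam: "0 \<le> l" "l \<le> 1/2"
    and mu: "\<mu> = (\<Sum>c\<in>bitstrs L. Q c * f c)"
  shows "(\<Sum>c\<in>bitstrs L. Q c * exp (l * (f c - \<mu>))) \<le> exp (4 * l^2)"
proof -
  have mub: "\<bar>\<mu>\<bar> \<le> 1"
  proof -
    have "\<bar>\<mu>\<bar> \<le> (\<Sum>c\<in>bitstrs L. \<bar>Q c * f c\<bar>)" unfolding mu by (rule sum_abs)
    also have "\<dots> \<le> (\<Sum>c\<in>bitstrs L. Q c)"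
      by (intro sum_mono) (use Q f in \<open>auto simp: abs_mult intro: mult_left_le\<close>)
    finally show ?thesis using sQ by simp
  qed
  have dev: "\<bar>f c - \<mu>\<bar> \<le> 2" if "c \<in> bitstrs L" for c using f[OF that] mub by linarith
  have t: "\<bar>l * (f c - \<mu>)\<bar> \<le> 1" if "c \<in> bitstrs L" for c
  proof -
    have "\<bar>l * (f c - \<mu>)\<bar> = l * \<bar>f c - \<mu>\<bar>" using lam by (simp add: abs_mult)
    also have "\<dots> \<le> (1/2) * 2" using lam dev[OF that] by (intro mult_mono) auto
    finally show ?thesis by simp
  qed
  have sq: "(l * (f c - \<mu>))^2 \<le> 4 * l^2" if "c \<in> bitstrs L" for c
  proof -
    have "(f c - \<mu>)^2 \<le> 2^2" using dev[OF that] by (metis abs_le_square_iff abs_numeral)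
    then have "l^2 * (f c - \<mu>)^2 \<le> l^2 * 4" by (intro mult_left_mono) auto
    then show ?thesis by (simp add: power_mult_distrib mult.commute)
  qed
  have "(\<Sum>c\<in>bitstrs L. Q c * exp (l * (f c - \<mu>))) \<le>
        (\<Sum>c\<in>bitstrs L. Q c * (1 + l * (f c - \<mu>) + (4 * l^2)))"
  proof (rule sum_mono)
    fix c assume c: "c \<in> bitstrs L"
    have "exp (l * (f c - \<mu>)) \<le> 1 + l * (f c - \<mu>) + (l * (f c - \<mu>))^2" by (rule exp_quad[OF t[OF c]])
    also have "\<dots> \<le> 1 + l * (f c - \<mu>) + 4 * l^2" using sq[OF c] by simp
    finally show "Q c * exp (l * (f c - \<mu>)) \<le> Q c * (1 + l * (f c - \<mu>) + 4 * l^2)"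
      using Q[OF c] by (rule mult_left_mono)
  qed
  also have "\<dots> = (\<Sum>c\<in>bitstrs L. Q c) * (1 - l * \<mu> + 4 * l^2) + l * (\<Sum>c\<in>bitstrs L. Q c * f c)"
    by (simp add: algebra_simps sum.distrib sum_subtractf sum_distrib_left sum_distrib_right)
  also have "\<dots> = 1 + 4 * l^2" using sQ mu by simp
  also have "\<dots> \<le> exp (4 * l^2)" by (rule exp_ge_add_one_self[simplified add.commute])
  finally show ?thesis .
qed

lemma chernoff_upper:
  fixes Q f :: "bool list \<Rightarrow> real"
  assumes Q: "\<And>c. c \<in> bitstrs L \<Longrightarrow> Q c \<ge> 0" and sQ: "(\<Sum>c\<in>bitstrs L. Q c) = 1"
    and f: "\<And>c. c \<in> bitstrs L \<Longrightarrow> \<bar>f c\<bar> \<le> 1"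
    and eps: "0 < \<epsilon>"
    and mu: "\<mu> = (\<Sum>c\<in>bitstrs L. Q c * f c)"
  shows "(\<Sum>s\<in>bitstrs (L*N). if real N * (\<mu> + \<epsilon>) < (\<Sum>j<N. f (chunk L j s))
            then (\<Prod>j<N. Q (chunk L j s)) else 0) \<le> exp (- (real N * \<epsilon>^2 / 16))"
proof -
  have mub: "\<bar>\<mu>\<bar> \<le> 1"
  proof -
    have "\<bar>\<mu>\<bar> \<le> (\<Sum>c\<in>bitstrs L. \<bar>Q c * f c\<bar>)" unfolding mu by (rule sum_abs)
    also have "\<dots> \<le> (\<Sum>c\<in>bitstrs L. Q c)"
      by (intro sum_mono) (use Q f in \<open>auto simp: abs_mult intro: mult_left_le\<close>)
    finally show ?thesis using sQ by simp
  qed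
  have fsum: "(\<Sum>j<N. f (chunk L j s)) \<le> real N" if "s \<in> bitstrs (L*N)" for s
  proof -
    have "(\<Sum>j<N. f (chunk L j s)) \<le> (\<Sum>j<N. 1)"
      by (intro sum_mono) (use f chunk_in[OF that] in \<open>force\<close>)
    then show ?thesis by simp
  qed
  show ?thesis
  proof (cases "\<epsilon> > 2")
    case True
    have "(\<Sum>s\<in>bitstrs (L*N). if real N * (\<mu> + \<epsilon>) < (\<Sum>j<N. f (chunk L j s))
            then (\<Prod>j<N. Q (chunk L j s)) else 0) = 0"
    proof (intro sum.neutral ballI)
      fix s assume s: "s \<in> bitstrs (L*N)"
      have "real N \<le> real N * (\<mu> + \<epsilon>)"
        using True mub by (intro mult_le_cancel_left1[THEN iffD2]) auto
      then show "(if real N * (\<mu> + \<epsilon>) < (\<Sum>j<N. f (chunk L j s))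
            then (\<Prod>j<N. Q (chunk L j s)) else 0) = 0" using fsum[OF s] by auto
    qed
    then show ?thesis by simp
  next
    case False
    define l where "l = \<epsilon> / 8"
    have lam: "0 \<le> l" "l \<le> 1/2" using eps False by (auto simp: l_def)
    define g where "g c = Q c * exp (l * (f c - \<mu>))" for c
    have trm: "(if real N * (\<mu> + \<epsilon>) < (\<Sum>j<N. f (chunk L j s))
            then (\<Prod>j<N. Q (chunk L j s)) else 0) \<le> exp (- (l * real N * \<epsilon>)) * (\<Prod>j<N. g (chunk L j s))"
      if s: "s \<in> bitstrs (L*N)" for s
    proof -
      have Qp: "0 \<le> (\<Prod>j<N. Q (chunk L j s))"
        by (intro prod_nonneg) (use Q chunk_in[OF s] in force)
      have ex: "exp (- (l * real N * \<epsilon>)) * (\<Prod>j<N. g (chunk L j s)) =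
                exp (l * ((\<Sum>j<N. f (chunk L j s)) - real N * (\<mu> + \<epsilon>))) * (\<Prod>j<N. Q (chunk L j s))"
      proof -
        have "l * ((\<Sum>j<N. f (chunk L j s)) - real N * (\<mu> + \<epsilon>)) =
              (\<Sum>j<N. l * (f (chunk L j s) - \<mu>)) + (- (l * real N * \<epsilon>))"
          by (simp add: sum_subtractf sum_distrib_left algebra_simps)
        then have "exp (l * ((\<Sum>j<N. f (chunk L j s)) - real N * (\<mu> + \<epsilon>))) =
              (\<Prod>j<N. exp (l * (f (chunk L j s) - \<mu>))) * exp (- (l * real N * \<epsilon>))"
          by (simp only: exp_add exp_sum finite_lessThan)
        then show ?thesis by (simp add: g_def prod.distrib ac_simps)
      qed
      show ?thesis
      proof (cases "real N * (\<mu> + \<epsilon>) < (\<Sum>j<N. f (chunk L j s))")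
        case True
        then have "1 \<le> exp (l * ((\<Sum>j<N. f (chunk L j s)) - real N * (\<mu> + \<epsilon>)))"
          using lam by simp
        then have "(\<Prod>j<N. Q (chunk L j s)) \<le>
             exp (l * ((\<Sum>j<N. f (chunk L j s)) - real N * (\<mu> + \<epsilon>))) * (\<Prod>j<N. Q (chunk L j s))"
          using Qp by (metis mult_1 mult_right_mono)
        then show ?thesis using True ex by simp
      next
        case False
        then show ?thesis using ex Qp by simp
      qed
    qed
    have "(\<Sum>s\<in>bitstrs (L*N). if real N * (\<mu> + \<epsilon>) < (\<Sum>j<N. f (chunk L j s))
            then (\<Prod>j<N. Q (chunk L j s)) else 0) \<le>
          (\<Sum>s\<in>bitstrs (L*N). exp (- (l * real N * \<epsilon>)) * (\<Prod>j<N. g (chunk L j s)))"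
      by (rule sum_mono) (rule trm)
    also have "\<dots> = exp (- (l * real N * \<epsilon>)) * (\<Prod>j<N. \<Sum>c\<in>bitstrs L. g c)"
      by (simp add: sum_distrib_left[symmetric] sum_chunks[of "\<lambda>_. g"])
    also have "\<dots> = exp (- (l * real N * \<epsilon>)) * (\<Sum>c\<in>bitstrs L. g c) ^ N"
      by simp
    also have "\<dots> \<le> exp (- (l * real N * \<epsilon>)) * exp (4 * l^2) ^ N"
    proof (intro mult_left_mono power_mono)
      show "(\<Sum>c\<in>bitstrs L. g c) \<le> exp (4 * l^2)"
        unfolding g_def by (rule mgf_bound[OF Q sQ f lam mu])
      show "0 \<le> (\<Sum>c\<in>bitstrs L. g c)"
        by (intro sum_nonneg) (use Q in \<open>auto simp: g_def\<close>)
    qed simp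
    also have "\<dots> = exp (- (real N * \<epsilon>^2 / 16))"
    proof -
      have "exp (4 * l^2) ^ N = exp (real N * (4 * l^2))" by (simp add: exp_of_nat_mult)
      then have "exp (- (l * real N * \<epsilon>)) * exp (4 * l^2) ^ N = exp (- (l * real N * \<epsilon>) + real N * (4 * l^2))"
        by (simp only: exp_add)
      also have "- (l * real N * \<epsilon>) + real N * (4 * l^2) = - (real N * \<epsilon>^2 / 16)"
        by (simp add: l_def power2_eq_square field_simps)
      finally show ?thesis .
    qed
    finally show ?thesis .
  qed
qed



lemma chernoff_two:
  fixes Q f :: "bool list \<Rightarrow> real"
  assumes Q: "\<And>c. c \<in> bitstrs L \<Longrightarrow> Q c \<ge> 0" and sQ: "(\<Sum>c\<in>bitstrs L. Q c) = 1"
    and f: "\<And>c. c \<in> bitstrs L \<Longrightarrow> \<bar>f c\<bar> \<le> 1"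
    and eps: "0 < \<epsilon>"
    and mu: "\<mu> = (\<Sum>c\<in>bitstrs L. Q c * f c)"
  shows "(\<Sum>s\<in>bitstrs (L*N). if real N * \<epsilon> < \<bar>(\<Sum>j<N. f (chunk L j s)) - real N * \<mu>\<bar>
            then (\<Prod>j<N. Q (chunk L j s)) else 0) \<le> 2 * exp (- (real N * \<epsilon>^2 / 16))"
proof -
  have mu': "- \<mu> = (\<Sum>c\<in>bitstrs L. Q c * (- f c))" by (simp add: mu sum_negf)
  have f': "\<And>c. c \<in> bitstrs L \<Longrightarrow> \<bar>- f c\<bar> \<le> 1" using f by simp
  have A: "(\<Sum>s\<in>bitstrs (L*N). if real N * (\<mu> + \<epsilon>) < (\<Sum>j<N. f (chunk L j s))
            then (\<Prod>j<N. Q (chunk L j s)) else 0) \<le> exp (- (real N * \<epsilon>^2 / 16))"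
    by (rule chernoff_upper[OF Q sQ f eps mu])
  have B: "(\<Sum>s\<in>bitstrs (L*N). if real N * (- \<mu> + \<epsilon>) < (\<Sum>j<N. - f (chunk L j s))
            then (\<Prod>j<N. Q (chunk L j s)) else 0) \<le> exp (- (real N * \<epsilon>^2 / 16))"
    by (rule chernoff_upper[OF Q sQ f' eps mu'])
  have "(\<Sum>s\<in>bitstrs (L*N). if real N * \<epsilon> < \<bar>(\<Sum>j<N. f (chunk L j s)) - real N * \<mu>\<bar>
            then (\<Prod>j<N. Q (chunk L j s)) else 0) \<le>
        (\<Sum>s\<in>bitstrs (L*N). (if real N * (\<mu> + \<epsilon>) < (\<Sum>j<N. f (chunk L j s))
            then (\<Prod>j<N. Q (chunk L j s)) else 0) + (if real N * (- \<mu> + \<epsilon>) < (\<Sum>j<N. - f (chunk L j s))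
            then (\<Prod>j<N. Q (chunk L j s)) else 0))"
  proof (rule sum_mono)
    fix s assume s: "s \<in> bitstrs (L*N)"
    have Qp: "0 \<le> (\<Prod>j<N. Q (chunk L j s))"
      by (intro prod_nonneg) (use Q chunk_in[OF s] in force)
    show "(if real N * \<epsilon> < \<bar>(\<Sum>j<N. f (chunk L j s)) - real N * \<mu>\<bar>
            then (\<Prod>j<N. Q (chunk L j s)) else 0) \<le> (if real N * (\<mu> + \<epsilon>) < (\<Sum>j<N. f (chunk L j s))
            then (\<Prod>j<N. Q (chunk L j s)) else 0) + (if real N * (- \<mu> + \<epsilon>) < (\<Sum>j<N. - f (chunk L j s))
            then (\<Prod>j<N. Q (chunk L j s)) else 0)"
      using Qp by (auto simp: sum_negf algebra_simps abs_if)
  qed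
  also have "\<dots> \<le> 2 * exp (- (real N * \<epsilon>^2 / 16))"
    using A B by (simp add: sum.distrib)
  finally show ?thesis .
qed

lemma bdot_append: "length a = length c \<Longrightarrow> bdot (a @ b) (c @ d) = bdot a c + bdot b d"
proof (induction a arbitrary: c)
  case Nil then show ?case by simp
next
  case (Cons x a) then show ?case by (cases c) auto
qed

lemma sgnY_split:
  assumes "length y = k" "length v' = n" "length w' = n" "k \<le> n"
  shows "sgnY (y @ z) v' w' = sgnY y (take k v') (take k w') * sgnY z (drop k v') (drop k w')"
proof -
  have v: "v' = take k v' @ drop k v'" and w: "w' = take k w' @ drop k w'" by simp_all
  have l: "length (take k v') = length (map fst y)" "length (take k w') = length (map fst y)"
     "length (take k w') = length (map snd y)" "length (take k v') = length (map snd y)"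
     "length (map fst y) = length (map snd y)"
    using assms by auto
  have "bdot w' (map fst (y @ z)) = bdot (take k w') (map fst y) + bdot (drop k w') (map fst z)"
    using bdot_append[OF l(2)] w by (metis map_append)
  moreover have "bdot v' (map snd (y @ z)) = bdot (take k v') (map snd y) + bdot (drop k v') (map snd z)"
    using bdot_append[OF l(4)] v by (metis map_append)
  moreover have "bdot (map fst (y @ z)) (map snd (y @ z)) = bdot (map fst y) (map snd y) + bdot (map fst z) (map snd z)"
    using bdot_append[OF l(5)] by simp
  ultimately show ?thesis by (simp add: sgnY_def power_add algebra_simps)
qed

lemma sum_labels_Suc:
  "(\<Sum>z\<in>labels (Suc m). F z) = (\<Sum>ab\<in>UNIV. \<Sum>z\<in>labels m. F (ab # z))"
proof -
  have "(\<Sum>z\<in>labels (Suc m). F z) = (\<Sum>p\<in>UNIV \<times> labels m. F (fst p # snd p))"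
    by (rule sum.reindex_bij_witness[where i = "\<lambda>p. fst p # snd p" and j = "\<lambda>z. (hd z, tl z)"])
       (auto simp: labels_def length_Suc_conv)
  also have "\<dots> = (\<Sum>ab\<in>UNIV. \<Sum>z\<in>labels m. F (ab # z))"
    by (simp add: sum.cartesian_product split_def)
  finally show ?thesis .
qed

lemma UNIV_bool_pair: "(UNIV :: (bool \<times> bool) set) = {(False,False),(False,True),(True,False),(True,True)}"
  by auto

lemma sum_sgnY_abs:
  "p \<in> bitstrs m \<Longrightarrow> q \<in> bitstrs m \<Longrightarrow> \<bar>\<Sum>z\<in>labels m. sgnY z p q\<bar> = 2^m"
proof (induction m arbitrary: p q)
  case 0 then show ?case by (simp add: labels_def bitstrs_def sgnY_def)
next
  case (Suc m)
  obtain p0 p' where p: "p = p0 # p'" "p' \<in> bitstrs m" using Suc.prems by (cases p) (auto simp: bitstrs_def)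
  obtain q0 q' where q: "q = q0 # q'" "q' \<in> bitstrs m" using Suc.prems by (cases q) (auto simp: bitstrs_def)
  have e: "sgnY ((a,b) # z) p q = (-1) ^ ((if q0 \<and> a then 1 else 0) + (if p0 \<and> b then 1 else 0) + (if a \<and> b then 1 else 0)) * sgnY z p' q'" for a b z
    by (simp add: sgnY_def p q power_add algebra_simps)
  have "(\<Sum>z\<in>labels (Suc m). sgnY z p q) =
     (\<Sum>ab\<in>UNIV. (-1) ^ ((if q0 \<and> fst ab then 1 else 0) + (if p0 \<and> snd ab then 1 else 0) + (if fst ab \<and> snd ab then 1 else 0))) * (\<Sum>z\<in>labels m. sgnY z p' q')"
    unfolding sum_labels_Suc sum_distrib_right
    by (intro sum.cong refl) (auto simp: e sum_distrib_left)
  moreover have "\<bar>\<Sum>ab\<in>(UNIV :: (bool \<times> bool) set). (-1::real) ^ ((if q0 \<and> fst ab then 1 else 0) + (if p0 \<and> snd ab then 1 else 0) + (if fst ab \<and> snd ab then 1 else 0))\<bar> = 2"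
    by (cases p0; cases q0) (simp_all add: UNIV_bool_pair)
  ultimately show ?case using Suc.IH[OF p(2) q(2)] by (simp add: abs_mult)
qed



definition beta :: "nat \<Rightarrow> bool list \<Rightarrow> bool list \<Rightarrow> bool list \<Rightarrow> bool list \<Rightarrow> complex" where
  "beta n v w c d = (if c = xr d v then (-1) ^ bdot w d else 0) * complex_of_real (1 / sqrt (2^n))"

lemma norm_fac: "complex_of_real (1 / sqrt (2^n)) * cnj (complex_of_real (1 / sqrt (2^n))) = 1 / 2^n"
proof -
  have "(1 / sqrt (2^n::real)) * (1 / sqrt (2^n)) = 1 / 2^n"
    by (simp add: real_sqrt_mult[symmetric])
  then show ?thesis by (metis complex_cnj_complex_of_real of_real_mult of_real_divide of_real_1 of_real_numeral of_real_power)
qed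

lemma bell_complete:
  assumes c1: "c1 \<in> bitstrs n" and d1: "d1 \<in> bitstrs n" and c2: "c2 \<in> bitstrs n" and d2: "d2 \<in> bitstrs n"
  shows "(\<Sum>v\<in>bitstrs n. \<Sum>w\<in>bitstrs n. beta n v w c1 d1 * cnj (beta n v w c2 d2)) =
         (if c1 = c2 \<and> d1 = d2 then 1 else 0)"
proof -
  have l: "length c1 = n" "length d1 = n" "length c2 = n" "length d2 = n"
    using assms by (auto simp: bitstrs_def)
  have iff: "(c1 = xr d1 v) = (v = xr d1 c1)" if "v \<in> bitstrs n" for v
  proof -
    have lv: "length v = n" using that by (simp add: bitstrs_def)
    have e1: "xr d1 (xr d1 v) = v" using lv l by (simp add: xr_cancel)
    have e2: "xr d1 (xr d1 c1) = c1" using l by (simp add: xr_cancel)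
    show ?thesis using e1 e2 by metis
  qed
  have "(\<Sum>v\<in>bitstrs n. \<Sum>w\<in>bitstrs n. beta n v w c1 d1 * cnj (beta n v w c2 d2)) =
        (\<Sum>v\<in>bitstrs n. if v = xr d1 c1 then (if c2 = xr d2 v then (1 / 2^n) *
            (\<Sum>w\<in>bitstrs n. (-1) ^ bdot w d1 * (-1) ^ bdot w d2) else 0) else 0)"
  proof (intro sum.cong refl)
    fix v assume v: "v \<in> bitstrs n"
    have pw: "beta n v w c1 d1 * cnj (beta n v w c2 d2) =
        (if c1 = xr d1 v \<and> c2 = xr d2 v then (1 / 2^n) * ((-1) ^ bdot w d1 * (-1) ^ bdot w d2) else 0)" for w
    proof -
      define k where "k = complex_of_real (1 / sqrt (2^n))"
      define A1 where "A1 = (if c1 = xr d1 v then (-1::complex) ^ bdot w d1 else 0)"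
      define A2 where "A2 = (if c2 = xr d2 v then (-1::complex) ^ bdot w d2 else 0)"
      have b1: "beta n v w c1 d1 = A1 * k" by (simp add: beta_def A1_def k_def)
      have b2: "cnj (beta n v w c2 d2) = A2 * cnj k" by (simp add: beta_def A2_def k_def)
      have "beta n v w c1 d1 * cnj (beta n v w c2 d2) = (A1 * A2) * (k * cnj k)"
        unfolding b1 b2 by (simp only: ac_simps)
      also have "k * cnj k = 1 / 2^n" unfolding k_def by (rule norm_fac)
      also have "A1 * A2 = (if c1 = xr d1 v \<and> c2 = xr d2 v then (-1) ^ bdot w d1 * (-1) ^ bdot w d2 else 0)"
        by (simp add: A1_def A2_def)
      finally show ?thesis by simp
    qed
    show "(\<Sum>w\<in>bitstrs n. beta n v w c1 d1 * cnj (beta n v w c2 d2)) =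
        (if v = xr d1 c1 then (if c2 = xr d2 v then (1 / 2^n) *
            (\<Sum>w\<in>bitstrs n. (-1) ^ bdot w d1 * (-1) ^ bdot w d2) else 0) else 0)"
    proof (cases "v = xr d1 c1 \<and> c2 = xr d2 v")
      case True
      then have "c1 = xr d1 v" using iff[OF v] by simp
      then have "\<And>w. beta n v w c1 d1 * cnj (beta n v w c2 d2) = (1 / 2^n) * ((-1) ^ bdot w d1 * (-1) ^ bdot w d2)"
        using True pw by presburger
      then show ?thesis using True by (simp add: sum_distrib_left)
    next
      case False
      then have "\<not> (c1 = xr d1 v \<and> c2 = xr d2 v)" using iff[OF v] by blast
      then show ?thesis using False by (simp only: pw if_False sum.neutral_const) auto
    qed
  qed
  also have "\<dots> = (if c2 = xr d2 (xr d1 c1) then (1 / 2^n) *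
            (\<Sum>w\<in>bitstrs n. (-1) ^ bdot w d1 * (-1) ^ bdot w d2) else 0)"
    using bitstrs_xr[OF d1 c1] by (simp add: sum.delta')
  finally have X: "(\<Sum>v\<in>bitstrs n. \<Sum>w\<in>bitstrs n. beta n v w c1 d1 * cnj (beta n v w c2 d2)) =
     (if c2 = xr d2 (xr d1 c1) then (1 / 2^n) *
            (\<Sum>w\<in>bitstrs n. (-1) ^ bdot w d1 * (-1) ^ bdot w d2) else 0)" .
  have Y: "(\<Sum>w\<in>bitstrs n. (-1::complex) ^ bdot w d1 * (-1) ^ bdot w d2) = (if d1 = d2 then 2^n else 0)"
  proof -
    have "(\<Sum>w\<in>bitstrs n. (-1::complex) ^ bdot w d1 * (-1) ^ bdot w d2) = (\<Sum>w\<in>bitstrs n. (-1::complex) ^ bdot w (xr d1 d2))"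
      using l by (intro sum.cong refl) (simp add: sg_xr)
    also have "\<dots> = (if xr d1 d2 = replicate n False then 2^n else 0)"
      by (rule char_sum[OF bitstrs_xr[OF d1 d2]])
    also have "(xr d1 d2 = replicate n False) = (d1 = d2)"
      using xr_eq_zeros[of d1 d2] l by simp
    finally show ?thesis .
  qed
  show ?thesis
  proof (cases "d1 = d2")
    case True
    have "xr d2 (xr d1 c1) = c1" using True l xr_cancel[of d1 c1] by simp
    then show ?thesis using True X Y by simp
  next
    case False
    then show ?thesis using X Y by simp
  qed
qed

lemma pair_amp:
  assumes v: "v \<in> bitstrs n"
  shows "(\<Sum>c\<in>bitstrs n. \<Sum>d\<in>bitstrs n. cnj (beta n v w c d) * \<psi> c * \<psi> d) =
     bellA n \<psi> v w * complex_of_real (1 / sqrt (2^n))"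
proof -
  have "(\<Sum>c\<in>bitstrs n. \<Sum>d\<in>bitstrs n. cnj (beta n v w c d) * \<psi> c * \<psi> d) =
        (\<Sum>d\<in>bitstrs n. \<Sum>c\<in>bitstrs n. cnj (beta n v w c d) * \<psi> c * \<psi> d)"
    by (rule sum.swap)
  also have "\<dots> = (\<Sum>d\<in>bitstrs n. \<Sum>c\<in>bitstrs n. if c = xr d v then
       ((-1) ^ bdot w d * \<psi> (xr d v) * \<psi> d) * complex_of_real (1 / sqrt (2^n)) else 0)"
    by (intro sum.cong refl) (simp add: beta_def)
  also have "\<dots> = (\<Sum>d\<in>bitstrs n. ((-1) ^ bdot w d * \<psi> (xr d v) * \<psi> d) * complex_of_real (1 / sqrt (2^n)))"
    by (intro sum.cong refl) (simp add: sum.delta' bitstrs_xr v)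
  also have "\<dots> = bellA n \<psi> v w * complex_of_real (1 / sqrt (2^n))"
    by (simp only: bellA_def sum_distrib_right)
  finally show ?thesis .
qed



definition ev :: "nat \<Rightarrow> nat \<Rightarrow> bool list \<Rightarrow> bool list \<Rightarrow> complex" where
  "ev n N s a = (\<Prod>j<N. beta n (take n (chunk (2*n) j s)) (drop n (chunk (2*n) j s))
                              (take n (chunk (2*n) j a)) (drop n (chunk (2*n) j a)))"

definition Qc :: "nat \<Rightarrow> (bool list \<Rightarrow> complex) \<Rightarrow> bool list \<Rightarrow> real" where
  "Qc n \<psi> c = qd n \<psi> (take n c) (drop n c)"

lemma take_drop_in: "c \<in> bitstrs (2*n) \<Longrightarrow> take n c \<in> bitstrs n \<and> drop n c \<in> bitstrs n"
  by (auto simp: bitstrs_def)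

lemma sum_pair_split: "(\<Sum>c\<in>bitstrs (2*n). g (take n c) (drop n c)) = (\<Sum>v\<in>bitstrs n. \<Sum>w\<in>bitstrs n. g v w)"
  using sum_take_drop[where L=n and K=n and g=g] by (simp add: mult_2)

lemma prod_indicator: fixes N :: nat shows "(\<Prod>j<N. (if P j then 1 else 0 :: 'a::comm_semiring_1)) = (if \<forall>j<N. P j then 1 else 0)"
  by (induction N) (auto simp: less_Suc_eq)

lemma ev_complete:
  assumes a: "a \<in> bitstrs (n*(2*N))" and b: "b \<in> bitstrs (n*(2*N))"
  shows "(\<Sum>s\<in>bitstrs (n*(2*N)). ev n N s a * cnj (ev n N s b)) = (if a = b then 1 else 0)"
proof -
  have mm: "n*(2*N) = (2*n)*N" by simp
  have a': "a \<in> bitstrs ((2*n)*N)" and b': "b \<in> bitstrs ((2*n)*N)" using a b mm by auto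
  define f where "f j c = beta n (take n c) (drop n c) (take n (chunk (2*n) j a)) (drop n (chunk (2*n) j a)) *
      cnj (beta n (take n c) (drop n c) (take n (chunk (2*n) j b)) (drop n (chunk (2*n) j b)))" for j c
  have "(\<Sum>s\<in>bitstrs (n*(2*N)). ev n N s a * cnj (ev n N s b)) =
        (\<Sum>s\<in>bitstrs ((2*n)*N). \<Prod>j<N. f j (chunk (2*n) j s))"
    unfolding mm ev_def f_def by (simp add: prod.distrib cnj_prod)
  also have "\<dots> = (\<Prod>j<N. \<Sum>c\<in>bitstrs (2*n). f j c)" by (rule sum_chunks)
  also have "\<dots> = (\<Prod>j<N. if chunk (2*n) j a = chunk (2*n) j b then 1 else 0)"
  proof (rule prod.cong[OF refl])
    fix j assume "j \<in> {..<N}"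
    then have ja: "chunk (2*n) j a \<in> bitstrs (2*n)" and jb: "chunk (2*n) j b \<in> bitstrs (2*n)"
      using chunk_in a' b' by auto
    have "(\<Sum>c\<in>bitstrs (2*n). f j c) = (\<Sum>v\<in>bitstrs n. \<Sum>w\<in>bitstrs n.
        beta n v w (take n (chunk (2*n) j a)) (drop n (chunk (2*n) j a)) *
        cnj (beta n v w (take n (chunk (2*n) j b)) (drop n (chunk (2*n) j b))))"
      unfolding f_def by (rule sum_pair_split)
    also have "\<dots> = (if take n (chunk (2*n) j a) = take n (chunk (2*n) j b) \<and>
                          drop n (chunk (2*n) j a) = drop n (chunk (2*n) j b) then 1 else 0)"
      using take_drop_in[OF ja] take_drop_in[OF jb] by (intro bell_complete) auto
    also have "(take n (chunk (2*n) j a) = take n (chunk (2*n) j b) \<and>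
                          drop n (chunk (2*n) j a) = drop n (chunk (2*n) j b)) = (chunk (2*n) j a = chunk (2*n) j b)"
      by (metis append_take_drop_id)
    finally show "(\<Sum>c\<in>bitstrs (2*n). f j c) = (if chunk (2*n) j a = chunk (2*n) j b then 1 else 0)" .
  qed
  also have "\<dots> = (if a = b then 1 else 0)"
    unfolding prod_indicator using chunks_eq[OF a' b'] by auto
  finally show ?thesis .
qed

lemma tensor_pow_pairs:
  "tensor_pow n (2*N) \<psi> b = (\<Prod>j<N. \<psi> (take n (chunk (2*n) j b)) * \<psi> (drop n (chunk (2*n) j b)))"
proof -
  have "tensor_pow n (2*N) \<psi> b = (\<Prod>i<2*N. \<psi> (chunk n i b))"
    by (simp add: tensor_pow_def chunk_def)
  also have "\<dots> = (\<Prod>j<N. \<psi> (chunk n (2*j) b) * \<psi> (chunk n (2*j+1) b))"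
    by (rule prod_pairs)
  finally show ?thesis by (simp only: chunk_double_even chunk_double_odd)
qed

lemma ev_amp:
  assumes s: "s \<in> bitstrs (n*(2*N))"
  shows "(\<Sum>b\<in>bitstrs (n*(2*N)). cnj (ev n N s b) * tensor_pow n (2*N) \<psi> b) =
     (\<Prod>j<N. bellA n \<psi> (take n (chunk (2*n) j s)) (drop n (chunk (2*n) j s)) * complex_of_real (1 / sqrt (2^n)))"
proof -
  have mm: "n*(2*N) = (2*n)*N" by simp
  have s': "s \<in> bitstrs ((2*n)*N)" using s mm by auto
  define f where "f j c = cnj (beta n (take n (chunk (2*n) j s)) (drop n (chunk (2*n) j s)) (take n c) (drop n c)) *
      (\<psi> (take n c) * \<psi> (drop n c))" for j c
  have "(\<Sum>b\<in>bitstrs (n*(2*N)). cnj (ev n N s b) * tensor_pow n (2*N) \<psi> b) =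
        (\<Sum>b\<in>bitstrs ((2*n)*N). \<Prod>j<N. f j (chunk (2*n) j b))"
    unfolding mm ev_def f_def tensor_pow_pairs by (simp add: prod.distrib cnj_prod)
  also have "\<dots> = (\<Prod>j<N. \<Sum>c\<in>bitstrs (2*n). f j c)" by (rule sum_chunks)
  also have "\<dots> = (\<Prod>j<N. bellA n \<psi> (take n (chunk (2*n) j s)) (drop n (chunk (2*n) j s)) * complex_of_real (1 / sqrt (2^n)))"
  proof (rule prod.cong[OF refl])
    fix j assume "j \<in> {..<N}"
    then have js: "chunk (2*n) j s \<in> bitstrs (2*n)" using chunk_in s' by auto
    have "(\<Sum>c\<in>bitstrs (2*n). f j c) = (\<Sum>v\<in>bitstrs n. \<Sum>w\<in>bitstrs n.
        cnj (beta n (take n (chunk (2*n) j s)) (drop n (chunk (2*n) j s)) v w) * \<psi> v * \<psi> w)"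
      unfolding f_def using sum_pair_split by (simp add: mult.assoc)
    also have "\<dots> = bellA n \<psi> (take n (chunk (2*n) j s)) (drop n (chunk (2*n) j s)) * complex_of_real (1 / sqrt (2^n))"
      using take_drop_in[OF js] by (intro pair_amp) auto
    finally show "(\<Sum>c\<in>bitstrs (2*n). f j c) = bellA n \<psi> (take n (chunk (2*n) j s)) (drop n (chunk (2*n) j s)) * complex_of_real (1 / sqrt (2^n))" .
  qed
  finally show ?thesis .
qed

lemma qform_rank1:
  "qform m (\<lambda>a b. u a * cnj (u b)) x = cnj (\<Sum>b\<in>bitstrs m. cnj (u b) * x b) * (\<Sum>b\<in>bitstrs m. cnj (u b) * x b)"
  unfolding qform_def cnj_sum sum_product
  by (intro sum.cong refl) (simp add: ac_simps)

lemma qform_rank1_real: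
  "qform m (\<lambda>a b. u a * cnj (u b)) x = complex_of_real ((cmod (\<Sum>b\<in>bitstrs m. cnj (u b) * x b))^2)"
  unfolding qform_rank1 complex_norm_square by (simp add: mult.commute)

lemma prob_prod:
  assumes s: "s \<in> bitstrs (n*(2*N))"
  shows "Re (qform (n*(2*N)) (\<lambda>a b. ev n N s a * cnj (ev n N s b)) (tensor_pow n (2*N) \<psi>)) =
         (\<Prod>j<N. Qc n \<psi> (chunk (2*n) j s))"
proof -
  have "Re (qform (n*(2*N)) (\<lambda>a b. ev n N s a * cnj (ev n N s b)) (tensor_pow n (2*N) \<psi>)) =
     (cmod (\<Prod>j<N. bellA n \<psi> (take n (chunk (2*n) j s)) (drop n (chunk (2*n) j s)) * complex_of_real (1 / sqrt (2^n))))^2"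
    unfolding qform_rank1_real ev_amp[OF s] by simp
  also have "\<dots> = (\<Prod>j<N. (cmod (bellA n \<psi> (take n (chunk (2*n) j s)) (drop n (chunk (2*n) j s))))^2 * (1 / sqrt (2^n))^2)"
  proof -
    have "cmod (\<Prod>j<N. bellA n \<psi> (take n (chunk (2*n) j s)) (drop n (chunk (2*n) j s)) * complex_of_real (1 / sqrt (2^n)))
      = (\<Prod>j<N. cmod (bellA n \<psi> (take n (chunk (2*n) j s)) (drop n (chunk (2*n) j s)) * complex_of_real (1 / sqrt (2^n))))"
      by (rule prod_norm[symmetric])
    then show ?thesis by (simp only: prod_power_distrib norm_mult power_mult_distrib norm_of_real abs_of_nonneg real_sqrt_ge_zero
         zero_le_divide_iff zero_le_one zero_le_power zero_le_numeral simp_thms)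
  qed
  also have "\<dots> = (\<Prod>j<N. Qc n \<psi> (chunk (2*n) j s))"
    by (simp add: Qc_def qd_def power_divide)
  finally show ?thesis .
qed



definition fk :: "nat \<Rightarrow> nat \<Rightarrow> (bool \<times> bool) list \<Rightarrow> bool list \<Rightarrow> real" where
  "fk n k y c = (1 / 2^(n-k)) * (\<Sum>z\<in>labels (n-k). sgnY (y @ z) (take n c) (drop n c))"

lemma abs_sgnY: "\<bar>sgnY y v w\<bar> = 1"
  by (simp add: sgnY_def power_abs)

lemma fk_bound:
  assumes k: "k \<le> n" and y: "y \<in> labels k" and c: "c \<in> bitstrs (2*n)"
  shows "\<bar>fk n k y c\<bar> \<le> 1"
proof -
  have l: "length y = k" "length (take n c) = n" "length (drop n c) = n"
    using y c by (auto simp: labels_def bitstrs_def)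
  have "(\<Sum>z\<in>labels (n-k). sgnY (y @ z) (take n c) (drop n c)) =
        sgnY y (take k (take n c)) (take k (drop n c)) * (\<Sum>z\<in>labels (n-k). sgnY z (drop k (take n c)) (drop k (drop n c)))"
    unfolding sum_distrib_left using l k by (intro sum.cong refl) (rule sgnY_split)
  moreover have "\<bar>\<Sum>z\<in>labels (n-k). sgnY z (drop k (take n c)) (drop k (drop n c))\<bar> = 2^(n-k)"
    by (rule sum_sgnY_abs) (use l in \<open>auto simp: bitstrs_def\<close>)
  ultimately have "\<bar>\<Sum>z\<in>labels (n-k). sgnY (y @ z) (take n c) (drop n c)\<bar> = 2^(n-k)"
    by (simp add: abs_mult abs_sgnY)
  then show ?thesis by (simp add: fk_def abs_mult)
qed

lemma Qc_nonneg: "Qc n \<psi> c \<ge> 0"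
  by (simp add: Qc_def qd_def)

lemma bdot_zeros[simp]: "bdot w (replicate m False) = 0" "bdot (replicate m False) w = 0"
proof -
  show "bdot w (replicate m False) = 0"
  proof (induction m arbitrary: w)
    case 0 then show ?case by simp
  next
    case (Suc m) then show ?case by (cases w) auto
  qed
  then show "bdot (replicate m False) w = 0" by (simp add: bdot_sym)
qed

lemma Qc_sum:
  assumes ps: "pure_state n \<psi>"
  shows "(\<Sum>c\<in>bitstrs (2*n). Qc n \<psi> c) = 1"
proof -
  define Y0 where "Y0 = replicate n (False, False)"
  have Y0: "Y0 \<in> labels n" by (simp add: Y0_def labels_def)
  have mf: "map fst Y0 = replicate n False" "map snd Y0 = replicate n False" by (simp_all add: Y0_def)
  have sg: "sgnY Y0 v w = 1" for v w by (simp add: sgnY_def mf)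
  have pe: "pauli_expect n \<psi> Y0 = 1"
  proof -
    have mz: "map2 (\<noteq>) b (replicate n False) = b" if "b \<in> bitstrs n" for b
      using that xr_zeros[of b n] by (simp add: bitstrs_def xr_def)
    have "pauli_expect n \<psi> Y0 = (\<Sum>b\<in>bitstrs n. cnj (\<psi> b) * \<psi> b)"
      unfolding pauli_expect_def Let_def mf bdot_zeros power_0 mult_1_left mult_1_right
      by (rule sum.cong[OF refl]) (simp only: mz)
    also have "\<dots> = complex_of_real (\<Sum>b\<in>bitstrs n. (cmod (\<psi> b))^2)"
      unfolding of_real_sum by (intro sum.cong refl) (simp only: complex_norm_square mult.commute)
    also have "\<dots> = 1" using ps by (simp add: pure_state_def)
    finally show ?thesis .
  qed
  have "complex_of_real (\<Sum>c\<in>bitstrs (2*n). Qc n \<psi> c) = (\<Sum>v\<in>bitstrs n. \<Sum>w\<in>bitstrs n. complex_of_real (qd n \<psi> v w * sgnY Y0 v w))"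
    unfolding Qc_def sum_pair_split[where g="\<lambda>v w. qd n \<psi> v w"] by (simp add: sg)
  also have "\<dots> = 1" using bell_identity[OF Y0, of \<psi>] pe by simp
  finally show ?thesis by (metis of_real_eq_1_iff)
qed

lemma mu_val:
  assumes k: "k \<le> n" and y: "y \<in> labels k"
  shows "(\<Sum>c\<in>bitstrs (2*n). Qc n \<psi> c * fk n k y c) = 2^k * pauli_marg n \<psi> k y"
proof -
  have yz: "y @ z \<in> labels n" if "z \<in> labels (n-k)" for z
    using that y k by (auto simp: labels_def)
  have "(\<Sum>c\<in>bitstrs (2*n). Qc n \<psi> c * fk n k y c) =
        (1 / 2^(n-k)) * (\<Sum>z\<in>labels (n-k). \<Sum>c\<in>bitstrs (2*n). Qc n \<psi> c * sgnY (y @ z) (take n c) (drop n c))"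
    unfolding fk_def sum_distrib_left
    by (subst sum.swap) (simp add: sum_distrib_left ac_simps)
  also have "\<dots> = (1 / 2^(n-k)) * (\<Sum>z\<in>labels (n-k). 2^n * pauli_dist n \<psi> (y @ z))"
  proof -
    have "(\<Sum>c\<in>bitstrs (2*n). Qc n \<psi> c * sgnY (y @ z) (take n c) (drop n c)) = 2^n * pauli_dist n \<psi> (y @ z)"
      if z: "z \<in> labels (n-k)" for z
    proof -
      have "(\<Sum>c\<in>bitstrs (2*n). Qc n \<psi> c * sgnY (y @ z) (take n c) (drop n c)) =
            Re (\<Sum>v\<in>bitstrs n. \<Sum>w\<in>bitstrs n. complex_of_real (qd n \<psi> v w * sgnY (y @ z) v w))"
        unfolding Qc_def sum_pair_split[where g="\<lambda>v w. qd n \<psi> v w * sgnY (y @ z) v w"] by (simp add: Re_sum)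
      also have "\<dots> = Re (pauli_expect n \<psi> (y @ z) ^ 2)" by (simp only: bell_identity[OF yz[OF z]])
      finally show ?thesis by (simp add: pauli_dist_def)
    qed
    then show ?thesis by simp
  qed
  also have "\<dots> = 2^k * pauli_marg n \<psi> k y"
  proof -
    have "(2::real)^n = 2^k * 2^(n-k)" using k by (simp add: power_add[symmetric])
    then show ?thesis by (simp add: pauli_marg_def sum_distrib_left[symmetric])
  qed
  finally show ?thesis .
qed

lemma numeric:
  fixes \<epsilon> \<delta> :: real
  assumes n: "1 \<le> n" and e: "0 < \<epsilon>" and d: "0 < \<delta>" "\<delta> \<le> 1/2"
    and N: "real N \<ge> 100 * real n * ln (1 / \<delta>) / \<epsilon>^2"
  shows "2 * exp (- (real N * \<epsilon>^2 / 16)) * (real n * 4^n) \<le> \<delta>"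
proof -
  define L where "L = ln (1 / \<delta>)"
  have L2: "ln 2 \<le> L" unfolding L_def using d by (intro ln_mono) (auto simp: field_simps)
  have ln2: "0 < ln (2::real)" by simp
  have Lp: "0 < L" using L2 ln2 by linarith
  have NL: "real N * \<epsilon>^2 \<ge> 100 * real n * L"
    using N e by (simp add: L_def field_simps)
  have c1: "2 * real n \<le> 4^n"
  proof -
    have "real n < 2^n" using less_exp[of n] by (metis of_nat_less_iff of_nat_numeral of_nat_power)
    moreover have "(2::real) \<le> 2^n" using n by (metis power_one_right power_increasing one_le_numeral)
    ultimately have "2 * real n \<le> 2^n * 2^n"
    proof -
      assume a1: "real n < 2^n" and a2: "(2::real) \<le> 2^n"
      have "2 * real n \<le> 2 * 2^n" using a1 by simp
      also have "\<dots> \<le> 2^n * 2^n" using a2 by (intro mult_right_mono) auto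
      finally show ?thesis .
    qed
    then show ?thesis by (simp add: power_mult_distrib[symmetric])
  qed
  have "2 * real n * 4^n \<le> 4^n * 4^n" using c1 by (simp add: mult_right_mono)
  also have "\<dots> = exp (real n * (4 * ln 2))"
  proof -
    have "(4::real)^n * 4^n = 16^n" by (simp add: power_mult_distrib[symmetric])
    also have "\<dots> = exp (real n * ln 16)" by (simp add: exp_of_nat_mult)
    also have "ln (16::real) = 4 * ln 2"
      using ln_realpow[of 2 4] by simp
    finally show ?thesis .
  qed
  also have "\<dots> \<le> exp (real n * (4 * L))" using L2 by (simp add: mult_left_mono)
  finally have A: "2 * real n * 4^n \<le> exp (4 * real n * L)" by (simp add: ac_simps)
  have "2 * exp (- (real N * \<epsilon>^2 / 16)) * (real n * 4^n) = exp (- (real N * \<epsilon>^2 / 16)) * (2 * real n * 4^n)"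
    by simp
  also have "\<dots> \<le> exp (- (real N * \<epsilon>^2 / 16)) * exp (4 * real n * L)"
    using A by (intro mult_left_mono) auto
  also have "\<dots> = exp (- (real N * \<epsilon>^2 / 16) + 4 * real n * L)" by (simp only: exp_add)
  also have "\<dots> \<le> exp (- L)"
  proof -
    have "real n * L \<ge> L" using n Lp by simp
    moreover have "4 * real n * L = 4 * (real n * L)" "100 * real n * L = 100 * (real n * L)" by simp_all
    ultimately have "- (real N * \<epsilon>^2 / 16) + 4 * real n * L \<le> - L" using NL Lp by linarith
    then show ?thesis by simp
  qed
  also have "\<dots> = \<delta>" using d by (simp add: L_def ln_div)
  finally show ?thesis .
qed



lemma enc_inj: "inj (\<lambda>s::bool list. list_encode (map of_bool s :: nat list))"
proof (rule injI)
  fix x y :: "bool list"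
  assume "list_encode (map of_bool x :: nat list) = list_encode (map of_bool y)"
  then have "(map of_bool x :: nat list) = map of_bool y" by (metis list_encode_inverse)
  moreover have "inj (of_bool :: bool \<Rightarrow> nat)" by (auto simp: inj_def)
  ultimately show "x = y" by (simp add: inj_map_eq_map)
qed

lemma sum_Pr:
  assumes ps: "pure_state n \<psi>"
  shows "(\<Sum>s\<in>bitstrs (n*(2*N)). \<Prod>j<N. Qc n \<psi> (chunk (2*n) j s)) = 1"
proof -
  have mm: "n*(2*N) = (2*n)*N" by simp
  show ?thesis unfolding mm sum_chunks[of "\<lambda>_. Qc n \<psi>"] by (simp add: Qc_sum[OF ps])
qed

lemma bad_bound:
  assumes ps: "pure_state n \<psi>" and e: "0 < \<epsilon>"
  shows "(\<Sum>s\<in>bitstrs (n*(2*N)). \<Sum>k\<in>{1..n}. \<Sum>y\<in>labels k.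
      (if real N * \<epsilon> < \<bar>(\<Sum>j<N. fk n k y (chunk (2*n) j s)) - real N * (\<Sum>c\<in>bitstrs (2*n). Qc n \<psi> c * fk n k y c)\<bar>
       then (\<Prod>j<N. Qc n \<psi> (chunk (2*n) j s)) else 0)) \<le> 2 * exp (- (real N * \<epsilon>^2 / 16)) * (real n * 4^n)"
proof -
  have mm: "n*(2*N) = (2*n)*N" by simp
  have "(\<Sum>s\<in>bitstrs (n*(2*N)). \<Sum>k\<in>{1..n}. \<Sum>y\<in>labels k.
      (if real N * \<epsilon> < \<bar>(\<Sum>j<N. fk n k y (chunk (2*n) j s)) - real N * (\<Sum>c\<in>bitstrs (2*n). Qc n \<psi> c * fk n k y c)\<bar>
       then (\<Prod>j<N. Qc n \<psi> (chunk (2*n) j s)) else 0)) =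
    (\<Sum>k\<in>{1..n}. \<Sum>y\<in>labels k. \<Sum>s\<in>bitstrs ((2*n)*N).
      (if real N * \<epsilon> < \<bar>(\<Sum>j<N. fk n k y (chunk (2*n) j s)) - real N * (\<Sum>c\<in>bitstrs (2*n). Qc n \<psi> c * fk n k y c)\<bar>
       then (\<Prod>j<N. Qc n \<psi> (chunk (2*n) j s)) else 0))"
    unfolding mm by (subst sum.swap, rule sum.cong[OF refl], rule sum.swap)
  also have "\<dots> \<le> (\<Sum>k\<in>{1..n}. \<Sum>y\<in>labels k. 2 * exp (- (real N * \<epsilon>^2 / 16)))"
  proof (intro sum_mono)
    fix k y assume k: "k \<in> {1..n}" and y: "y \<in> labels k"
    show "(\<Sum>s\<in>bitstrs ((2*n)*N).
      (if real N * \<epsilon> < \<bar>(\<Sum>j<N. fk n k y (chunk (2*n) j s)) - real N * (\<Sum>c\<in>bitstrs (2*n). Qc n \<psi> c * fk n k y c)\<bar>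
       then (\<Prod>j<N. Qc n \<psi> (chunk (2*n) j s)) else 0)) \<le> 2 * exp (- (real N * \<epsilon>^2 / 16))"
    proof (rule chernoff_two[OF _ Qc_sum[OF ps] _ e refl])
      show "\<And>c. 0 \<le> Qc n \<psi> c" by (rule Qc_nonneg)
      show "\<And>c. c \<in> bitstrs (2 * n) \<Longrightarrow> \<bar>fk n k y c\<bar> \<le> 1"
        using k y by (intro fk_bound) auto
    qed
  qed
  also have "\<dots> = 2 * exp (- (real N * \<epsilon>^2 / 16)) * (\<Sum>k\<in>{1..n}. 4^k)"
    by (simp add: card_labels sum_distrib_left mult.commute[of "4^_"])
  also have "\<dots> \<le> 2 * exp (- (real N * \<epsilon>^2 / 16)) * (real n * 4^n)"
  proof (rule mult_left_mono)
    have "(\<Sum>k\<in>{1..n}. (4::real)^k) \<le> (\<Sum>k\<in>{1..n}. 4^n)"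
      by (intro sum_mono power_increasing) auto
    then show "(\<Sum>k\<in>{1..n}. (4::real)^k) \<le> real n * 4^n" by simp
  qed simp
  finally show ?thesis .
qed

theorem lemma12:
  shows "\<exists>C>0. \<forall>(n::nat) (\<epsilon>::real) (\<delta>::real) (N::nat).
     0 < \<epsilon> \<longrightarrow> 0 < \<delta> \<longrightarrow> \<delta> \<le> 1/2 \<longrightarrow>
     real N \<ge> C * real n * ln (1 / \<delta>) / \<epsilon>^2 \<longrightarrow>
     (\<exists>(\<Omega>::nat set) E (est :: nat \<Rightarrow> nat \<Rightarrow> (bool \<times> bool) list \<Rightarrow> real).
        povm (n * (2 * N)) \<Omega> E \<and>
        (\<forall>\<psi>. pure_state n \<psi> \<longrightarrow>
           (\<Sum>r\<in>{r\<in>\<Omega>. \<forall>k\<in>{1..n}. \<forall>y\<in>labels k.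
                      \<bar>est r k y - pauli_marg n \<psi> k y\<bar> \<le> \<epsilon> / 2^k}.
               outcome_prob (n * (2 * N)) E r (tensor_pow n (2 * N) \<psi>)) \<ge> 1 - \<delta>))"
proof (intro exI[of _ 100] conjI allI impI)
  fix n :: nat and \<epsilon> \<delta> :: real and N :: nat
  assume e: "0 < \<epsilon>" and d1: "0 < \<delta>" and d2: "\<delta> \<le> 1/2"
    and NN: "real N \<ge> 100 * real n * ln (1 / \<delta>) / \<epsilon>^2"
  define S where "S = bitstrs (n * (2 * N))"
  define enc :: "bool list \<Rightarrow> nat" where "enc s = list_encode (map of_bool s)" for s
  define dec where "dec = the_inv_into S enc"
  define \<Omega> where "\<Omega> = enc ` S"
  define E where "E = (\<lambda>r a b. ev n N (dec r) a * cnj (ev n N (dec r) b))"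
  define est where "est r k y = (1 / 2^k) * ((\<Sum>j<N. fk n k y (chunk (2*n) j (dec r))) / real N)" for r k y
  have inj: "inj_on enc S" using enc_inj by (auto simp: enc_def inj_on_def inj_def)
  have dec_enc: "dec (enc s) = s" if "s \<in> S" for s
    unfolding dec_def using inj that by (rule the_inv_into_f_f)
  have finS: "finite S" by (simp add: S_def)
  have povm: "povm (n * (2 * N)) \<Omega> E"
    unfolding povm_def
  proof (intro conjI ballI allI)
    show "finite \<Omega>" using finS by (simp add: \<Omega>_def)
  next
    fix r v assume "r \<in> \<Omega>"
    show "psd (n * (2 * N)) (E r)"
      unfolding psd_def E_def qform_rank1_real by simp
  next
    fix a b assume a: "a \<in> bitstrs (n * (2 * N))" and b: "b \<in> bitstrs (n * (2 * N))"
    have "(\<Sum>r\<in>\<Omega>. E r a b) = (\<Sum>s\<in>S. E (enc s) a b)"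
      unfolding \<Omega>_def using sum.reindex[OF inj, of "\<lambda>r. E r a b"] by (simp add: o_def)
    also have "\<dots> = (\<Sum>s\<in>S. ev n N s a * cnj (ev n N s b))"
      by (intro sum.cong refl) (simp add: E_def dec_enc)
    also have "\<dots> = (if a = b then 1 else 0)"
      unfolding S_def by (rule ev_complete[OF a b])
    finally show "(\<Sum>r\<in>\<Omega>. E r a b) = (if a = b then 1 else 0)" .
  qed
  show "\<exists>(\<Omega>::nat set) E (est :: nat \<Rightarrow> nat \<Rightarrow> (bool \<times> bool) list \<Rightarrow> real).
        povm (n * (2 * N)) \<Omega> E \<and>
        (\<forall>\<psi>. pure_state n \<psi> \<longrightarrow>
           (\<Sum>r\<in>{r\<in>\<Omega>. \<forall>k\<in>{1..n}. \<forall>y\<in>labels k.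
                      \<bar>est r k y - pauli_marg n \<psi> k y\<bar> \<le> \<epsilon> / 2^k}.
               outcome_prob (n * (2 * N)) E r (tensor_pow n (2 * N) \<psi>)) \<ge> 1 - \<delta>)"
  proof (intro exI conjI allI impI)
    show "povm (n * (2 * N)) \<Omega> E" by (rule povm)
  next
    fix \<psi> assume ps: "pure_state n \<psi>"
    define good where "good r \<longleftrightarrow> (\<forall>k\<in>{1..n}. \<forall>y\<in>labels k.
                      \<bar>est r k y - pauli_marg n \<psi> k y\<bar> \<le> \<epsilon> / 2^k)" for r
    define Pr where "Pr s = (\<Prod>j<N. Qc n \<psi> (chunk (2*n) j s))" for s
    have Pr_nonneg: "0 \<le> Pr s" for s unfolding Pr_def by (intro prod_nonneg) (simp add: Qc_nonneg)
    have op: "outcome_prob (n * (2 * N)) E (enc s) (tensor_pow n (2 * N) \<psi>) = Pr s" if "s \<in> S" for s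
      unfolding outcome_prob_def E_def Pr_def dec_enc[OF that]
      by (rule prob_prod) (use that in \<open>simp add: S_def\<close>)
    have "{r\<in>\<Omega>. good r} = enc ` {s\<in>S. good (enc s)}" by (auto simp: \<Omega>_def)
    then have "(\<Sum>r\<in>{r\<in>\<Omega>. good r}. outcome_prob (n * (2 * N)) E r (tensor_pow n (2 * N) \<psi>))
        = (\<Sum>s\<in>{s\<in>S. good (enc s)}. outcome_prob (n * (2 * N)) E (enc s) (tensor_pow n (2 * N) \<psi>))"
      using inj by (simp add: sum.reindex inj_on_subset[of enc S])
    also have "\<dots> = (\<Sum>s\<in>{s\<in>S. good (enc s)}. Pr s)"
      by (intro sum.cong refl) (simp add: op)
    also have "\<dots> = (\<Sum>s\<in>S. if good (enc s) then Pr s else 0)"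
      using finS by (simp add: sum.inter_filter)
    also have "\<dots> = (\<Sum>s\<in>S. Pr s) - (\<Sum>s\<in>S. if \<not> good (enc s) then Pr s else 0)"
      by (simp only: sum_subtractf[symmetric]) (rule sum.cong, auto)
    also have "(\<Sum>s\<in>S. Pr s) = 1" unfolding S_def Pr_def by (rule sum_Pr[OF ps])
    finally have eq: "(\<Sum>r\<in>{r\<in>\<Omega>. good r}. outcome_prob (n * (2 * N)) E r (tensor_pow n (2 * N) \<psi>))
        = 1 - (\<Sum>s\<in>S. if \<not> good (enc s) then Pr s else 0)" .
    have bad: "(\<Sum>s\<in>S. if \<not> good (enc s) then Pr s else 0) \<le> \<delta>"
    proof (cases "n = 0")
      case True
      then have "good r" for r by (simp add: good_def)
      then show ?thesis using d1 by simp
    next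
      case False
      then have n1: "1 \<le> n" by simp
      have Lp: "0 < ln (1 / \<delta>)" using d1 d2 by simp
      have Npos: "0 < N"
      proof -
        have "0 < 100 * real n * ln (1 / \<delta>) / \<epsilon>^2" using n1 Lp e by simp
        then show ?thesis using NN by linarith
      qed
      define mu where "mu k y = (\<Sum>c\<in>bitstrs (2*n). Qc n \<psi> c * fk n k y c)" for k y
      define T where "T s k y = (if real N * \<epsilon> < \<bar>(\<Sum>j<N. fk n k y (chunk (2*n) j s)) - real N * mu k y\<bar>
           then Pr s else 0)" for s k y
      have Tn: "0 \<le> T s k y" for s k y using Pr_nonneg by (simp add: T_def)
      have pt: "(if \<not> good (enc s) then Pr s else 0) \<le> (\<Sum>k\<in>{1..n}. \<Sum>y\<in>labels k. T s k y)"
        if s: "s \<in> S" for s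
      proof (cases "good (enc s)")
        case True then show ?thesis by (simp add: Tn sum_nonneg)
      next
        case False
        then obtain k y where k: "k \<in> {1..n}" and y: "y \<in> labels k"
          and gt: "\<epsilon> / 2^k < \<bar>est (enc s) k y - pauli_marg n \<psi> k y\<bar>"
          unfolding good_def by force
        have mk: "mu k y = 2^k * pauli_marg n \<psi> k y" unfolding mu_def
          by (rule mu_val) (use k y in auto)
        have "est (enc s) k y - pauli_marg n \<psi> k y =
              ((\<Sum>j<N. fk n k y (chunk (2*n) j s)) - real N * mu k y) / (real N * 2^k)"
          using Npos by (simp add: est_def dec_enc[OF s] mk field_simps)
        then have "\<epsilon> / 2^k < \<bar>(\<Sum>j<N. fk n k y (chunk (2*n) j s)) - real N * mu k y\<bar> / (real N * 2^k)"
          using gt by (simp add: abs_divide)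
        then have "real N * \<epsilon> < \<bar>(\<Sum>j<N. fk n k y (chunk (2*n) j s)) - real N * mu k y\<bar>"
          using Npos by (simp add: field_simps)
        then have "T s k y = Pr s" by (simp add: T_def)
        also have "\<dots> = (if \<not> good (enc s) then Pr s else 0)" using False by simp
        finally have "(if \<not> good (enc s) then Pr s else 0) = T s k y" by simp
        also have "\<dots> \<le> (\<Sum>y\<in>labels k. T s k y)"
          by (rule member_le_sum) (use y Tn in auto)
        also have "\<dots> \<le> (\<Sum>k\<in>{1..n}. \<Sum>y\<in>labels k. T s k y)"
          by (rule member_le_sum[where f = "\<lambda>k. \<Sum>y\<in>labels k. T s k y"]) (use k Tn in \<open>auto intro: sum_nonneg\<close>)
        finally show ?thesis .
      qed
      have "(\<Sum>s\<in>S. if \<not> good (enc s) then Pr s else 0) \<le> (\<Sum>s\<in>S. \<Sum>k\<in>{1..n}. \<Sum>y\<in>labels k. T s k y)"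
        by (rule sum_mono) (rule pt)
      also have "\<dots> \<le> 2 * exp (- (real N * \<epsilon>^2 / 16)) * (real n * 4^n)"
        unfolding S_def T_def mu_def Pr_def by (rule bad_bound[OF ps e])
      also have "\<dots> \<le> \<delta>" by (rule numeric[OF n1 e d1 d2 NN])
      finally show ?thesis .
    qed
    show "(\<Sum>r\<in>{r\<in>\<Omega>. \<forall>k\<in>{1..n}. \<forall>y\<in>labels k.
                      \<bar>est r k y - pauli_marg n \<psi> k y\<bar> \<le> \<epsilon> / 2^k}.
               outcome_prob (n * (2 * N)) E r (tensor_pow n (2 * N) \<psi>)) \<ge> 1 - \<delta>"
      using eq bad unfolding good_def by simp
  qed
qed (simp)

end
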